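(* Let $G$ be a $4$-regular graph, let $f$ be a proper $5$-edge coloring of $G$, and let $P$ be a path in $G$ all of whose edges are colored $1$ or $2$ under $f$. (a) Suppose $P$ has length $4$ with internal vertices $v_1,v_2,v_3$ in order along $P$, and suppose at least one of the following conditions fails: (i) $|f(v_i)\cap f(v_j)\setminus\{1,2\}|=1$ for all $i,j\in\{1,2,3\}$ with $i\neq j$; (ii) if $x_1,x_2$ are the two neighbors of $v_2$ distinct from $v_1$ and $v_3$, then each of the colors $3,4,5$ appears at $x_1$ and at $x_2$ under $f$. Then there is a proper $5$-edge coloring $g$ of $G$, obtainable from $f$ by a sequence of interchanges on bicolored paths with both colors in $\{3,4,5\}$, such that some color in $\{3,4,5\}$ is missing from $g(v_1)\cup g(v_2)$ or from $g(v_2)\cup g(v_3)$. (b) If $P$ has length $5$ with internal vertices $v_1,v_2,v_3,v_4$ in order along $P$, then there is a proper $5$-edge coloring $g$ of $G$, obtainable from $f$ by a sequence of interchanges on bicolored paths with both colors in $\{3,4,5\}$, such that for some $i\in\{1,2,3\}$ some color in $\{3,4,5\}$ is missing from $g(v_i)\cup g(v_{i+1})$.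
   Context: Graphs are finite and simple. A proper $5$-edge coloring is a map $f:E(G)\to\{1,\dots,5\}$ with adjacent edges receiving distinct colors. For a vertex $v$, $f(v)$ denotes the set of colors of edges incident to $v$; a color appears at $v$ if it is in $f(v)$. $G_f(a,b)$ is the subgraph induced by the edges colored $a$ or $b$. An interchange swaps colors $a$ and $b$ on one connected component of $G_f(a,b)$; an interchange on a bicolored path with colors $a,b$ is one where that component is a path. *)

theory Defs
  imports Main
begin

definition simple_graph :: "'a set \<Rightarrow> 'a set set \<Rightarrow> bool" where
  "simple_graph V E \<longleftrightarrow> finite V \<and> (\<forall>e\<in>E. \<exists>u v. u \<noteq> v \<and> u \<in> V \<and> v \<in> V \<and> e = {u, v})"

definition neighbors :: "'a set set \<Rightarrow> 'a \<Rightarrow> 'a set" where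
  "neighbors E v = {u. {v, u} \<in> E}"

definition regular :: "'a set \<Rightarrow> 'a set set \<Rightarrow> nat \<Rightarrow> bool" where
  "regular V E k \<longleftrightarrow> (\<forall>v\<in>V. card {e\<in>E. v \<in> e} = k)"

definition proper_edge_coloring :: "'a set set \<Rightarrow> ('a set \<Rightarrow> nat) \<Rightarrow> nat \<Rightarrow> bool" where
  "proper_edge_coloring E f k \<longleftrightarrow>
     (\<forall>e\<in>E. f e \<in> {1..k}) \<and>
     (\<forall>e1\<in>E. \<forall>e2\<in>E. e1 \<noteq> e2 \<and> e1 \<inter> e2 \<noteq> {} \<longrightarrow> f e1 \<noteq> f e2)"

definition colors_at :: "'a set set \<Rightarrow> ('a set \<Rightarrow> nat) \<Rightarrow> 'a \<Rightarrow> nat set" where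
  "colors_at E f v = f ` {e\<in>E. v \<in> e}"

definition path_edges :: "'a list \<Rightarrow> 'a set set" where
  "path_edges xs = {{xs ! i, xs ! Suc i} | i. Suc i < length xs}"

definition is_path :: "'a set \<Rightarrow> 'a set set \<Rightarrow> 'a list \<Rightarrow> bool" where
  "is_path V E xs \<longleftrightarrow> xs \<noteq> [] \<and> distinct xs \<and> set xs \<subseteq> V \<and> path_edges xs \<subseteq> E"

definition bicolored_edges :: "'a set set \<Rightarrow> ('a set \<Rightarrow> nat) \<Rightarrow> nat \<Rightarrow> nat \<Rightarrow> 'a set set" where
  "bicolored_edges E f a b = {e\<in>E. f e = a \<or> f e = b}"

definition bicolored_component ::
  "'a set set \<Rightarrow> ('a set \<Rightarrow> nat) \<Rightarrow> nat \<Rightarrow> nat \<Rightarrow> 'a set set \<Rightarrow> bool" where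
  "bicolored_component E f a b C \<longleftrightarrow> C \<noteq> {} \<and>
     (\<exists>v. C = {e\<in>bicolored_edges E f a b.
                 \<exists>u\<in>e. (\<lambda>x y. {x, y} \<in> bicolored_edges E f a b)\<^sup>*\<^sup>* v u})"

definition swap_colors :: "nat \<Rightarrow> nat \<Rightarrow> nat \<Rightarrow> nat" where
  "swap_colors a b c = (if c = a then b else if c = b then a else c)"

definition path_interchange_345 ::
  "'a set \<Rightarrow> 'a set set \<Rightarrow> ('a set \<Rightarrow> nat) \<Rightarrow> ('a set \<Rightarrow> nat) \<Rightarrow> bool" where
  "path_interchange_345 V E f g \<longleftrightarrow>
     (\<exists>a b C. a \<in> {3,4,5} \<and> b \<in> {3,4,5} \<and> a \<noteq> b \<and>
        bicolored_component E f a b C \<and>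
        (\<exists>xs. is_path V E xs \<and> path_edges xs = C) \<and>
        g = (\<lambda>e. if e \<in> C then swap_colors a b (f e) else f e))"

end

theory Submission
  imports Defs
begin


lemma pe_mem: "e \<in> path_edges xs \<longleftrightarrow> (\<exists>i. Suc i < length xs \<and> e = {xs!i, xs!Suc i})"
  unfolding path_edges_def by blast

lemma pe_snoc: assumes "xs \<noteq> []" shows "path_edges (xs @ [y]) = insert {last xs, y} (path_edges xs)"
proof (intro set_eqI iffI)
  fix e assume "e \<in> path_edges (xs @ [y])"
  then obtain i where i: "Suc i < Suc (length xs)" "e = {(xs@[y])!i, (xs@[y])!Suc i}" by (auto simp: pe_mem)
  show "e \<in> insert {last xs, y} (path_edges xs)"
  proof (cases "Suc i < length xs")
    case True then show ?thesis using i by (auto simp: pe_mem nth_append)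
  next
    case False then have "i = length xs - 1" "Suc i = length xs" using i assms by auto
    then show ?thesis using i assms by (auto simp: nth_append last_conv_nth)
  qed
next
  fix e assume "e \<in> insert {last xs, y} (path_edges xs)"
  then show "e \<in> path_edges (xs @ [y])"
  proof
    assume "e = {last xs, y}"
    then show ?thesis using assms
      by (auto simp: pe_mem nth_append last_conv_nth intro!: exI[of _ "length xs - 1"])
  next
    assume "e \<in> path_edges xs"
    then obtain i where "Suc i < length xs" "e = {xs!i, xs!Suc i}" by (auto simp: pe_mem)
    then show ?thesis by (auto simp: pe_mem nth_append intro!: exI[of _ i])
  qed
qed

lemma swap_inv[simp]: "swap_colors a b (swap_colors a b c) = c"
  by (auto simp: swap_colors_def)

lemma swap_same: "a \<in> S \<Longrightarrow> b \<in> S \<Longrightarrow> swap_colors a b ` S = S"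
  by (auto simp: swap_colors_def image_iff)



locale G4 =
  fixes V :: "'a set" and E :: "'a set set"
  assumes sg: "simple_graph V E" and reg: "regular V E 4"
begin

lemma edgeE: assumes "e \<in> E" obtains u w where "u \<noteq> w" "u \<in> V" "w \<in> V" "e = {u,w}"
  using sg assms unfolding simple_graph_def by blast

lemma edge2: assumes "{x,y} \<in> E" shows "x \<in> V" "y \<in> V" "x \<noteq> y"
proof -
  obtain u w where "u \<noteq> w" "u \<in> V" "w \<in> V" "{x,y} = {u,w}" using edgeE[OF assms] by blast
  then show "x \<in> V" "y \<in> V" "x \<noteq> y" by (auto simp: doubleton_eq_iff)
qed

lemma finV: "finite V" using sg by (simp add: simple_graph_def)

lemma proper_eq: assumes "proper_edge_coloring E f k" "e1\<in>E" "e2\<in>E" "x\<in>e1" "x\<in>e2" "f e1 = f e2"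
  shows "e1 = e2"
  using assms unfolding proper_edge_coloring_def by blast

lemma deg2:
  assumes "proper_edge_coloring E f k"
    and "e1 \<in> bicolored_edges E f a b" "e2 \<in> bicolored_edges E f a b" "e3 \<in> bicolored_edges E f a b"
    and "x \<in> e1" "x \<in> e2" "x \<in> e3"
  shows "e1 = e2 \<or> e1 = e3 \<or> e2 = e3"
  using assms proper_eq[OF assms(1)] unfolding bicolored_edges_def by auto

lemma chain:
  fixes f a b v
  defines "H \<equiv> bicolored_edges E f a b"
  defines "C \<equiv> {e\<in>H. \<exists>u\<in>e. (\<lambda>x y. {x, y} \<in> H)\<^sup>*\<^sup>* v u}"
  assumes pf: "proper_edge_coloring E f 5" and vV: "v \<in> V"
    and uniq: "\<And>e1 e2. e1 \<in> H \<Longrightarrow> e2 \<in> H \<Longrightarrow> v \<in> e1 \<Longrightarrow> v \<in> e2 \<Longrightarrow> e1 = e2"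
  shows "\<exists>xs. distinct xs \<and> xs \<noteq> [] \<and> hd xs = v \<and> set xs \<subseteq> V \<and> path_edges xs = C \<and>
     (\<forall>u\<in>set xs. u \<noteq> hd xs \<longrightarrow> u \<noteq> last xs \<longrightarrow> (\<exists>e1\<in>H. \<exists>e2\<in>H. e1 \<noteq> e2 \<and> u \<in> e1 \<and> u \<in> e2))"
proof -
  let ?R = "\<lambda>x y. {x, y} \<in> H"
  have HE: "H \<subseteq> E" unfolding H_def bicolored_edges_def by auto
  have d2: "e1 = e2 \<or> e1 = e3 \<or> e2 = e3" if "e1 \<in> H" "e2 \<in> H" "e3 \<in> H" "x \<in> e1" "x \<in> e2" "x \<in> e3" for e1 e2 e3 x
    using deg2[OF pf] that unfolding H_def by blast
  define S where "S = {xs. distinct xs \<and> xs \<noteq> [] \<and> hd xs = v \<and> set xs \<subseteq> V \<and> path_edges xs \<subseteq> H}"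
  have vS: "[v] \<in> S" using vV by (auto simp: S_def pe_mem)
  have bnd: "length xs \<le> card V" if "xs \<in> S" for xs
  proof -
    have "length xs = card (set xs)" using that by (simp add: S_def distinct_card)
    also have "\<dots> \<le> card V" using that finV by (intro card_mono) (auto simp: S_def)
    finally show ?thesis .
  qed
  have "\<exists>n. (\<exists>xs\<in>S. length xs = n) \<and> (\<forall>m. (\<exists>xs\<in>S. length xs = m) \<longrightarrow> m \<le> n)"
    using Nat.ex_has_greatest_nat[of "\<lambda>n. \<exists>xs\<in>S. length xs = n" 1 "card V"] vS bnd by fastforce
  then obtain xs where xsS: "xs \<in> S" and mx: "\<And>ys. ys \<in> S \<Longrightarrow> length ys \<le> length xs" by blast
  have dxs: "distinct xs" and nexs: "xs \<noteq> []" and hxs: "hd xs = v" and sxs: "set xs \<subseteq> V"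
    and pxs: "path_edges xs \<subseteq> H" using xsS by (auto simp: S_def)
  have x0: "xs ! 0 = v" using hxs nexs by (simp add: hd_conv_nth)
  have pe: "{xs!i, xs!Suc i} \<in> H" if "Suc i < length xs" for i
    using pxs that pe_mem[of _ xs] by blast
  have reach_in: "y \<in> set xs" if "?R\<^sup>*\<^sup>* v y" for y
    using that
  proof (induction rule: rtranclp_induct)
    case base then show ?case using hxs nexs by auto
  next
    case (step x y)
    show ?case
    proof (rule ccontr)
      assume yn: "y \<notin> set xs"
      obtain i where i: "i < length xs" "xs ! i = x" using step.IH by (auto simp: in_set_conv_nth)
      have yV: "y \<in> V" using step.hyps(2) HE edge2 by blast
      show False
      proof (cases "Suc i = length xs")
        case True
        then have lx: "last xs = x" using i nexs by (auto simp: last_conv_nth dest: sym)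
        have "xs @ [y] \<in> S" using xsS yn yV step.hyps(2) lx nexs by (auto simp: S_def pe_snoc)
        then show False using mx by fastforce
      next
        case False
        then have si: "Suc i < length xs" using i by simp
        have e1: "{x, xs!Suc i} \<in> H" using pe[OF si] i by simp
        have ne: "{x, xs!Suc i} \<noteq> {x,y}" using yn si by (auto simp: doubleton_eq_iff)
        show False
        proof (cases i)
          case 0
          then have "x = v" using i x0 by simp
          then show False using uniq[OF e1 step.hyps(2)] ne by simp
        next
          case (Suc j)
          have e3: "{xs!j, x} \<in> H" using pe[of j] i Suc by simp
          have n1: "xs!j \<noteq> xs!Suc i" using dxs si Suc by (simp add: nth_eq_iff_index_eq)
          have n2: "xs!j \<noteq> x" using dxs i Suc by (auto simp: nth_eq_iff_index_eq)
          have "{xs!j, x} \<noteq> {x, xs!Suc i}" "{xs!j, x} \<noteq> {x,y}"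
            using n1 n2 yn i Suc by (auto simp: doubleton_eq_iff)
          then show False using d2[OF e3 e1 step.hyps(2), of x] ne by auto
        qed
      qed
    qed
  qed
  have reach_list: "?R\<^sup>*\<^sup>* v (xs!i)" if "i < length xs" for i
    using that
  proof (induction i)
    case 0 then show ?case using x0 by simp
  next
    case (Suc i)
    then show ?case using pe[of i] by (auto intro: rtranclp.rtrancl_into_rtrancl)
  qed
  have adj: "j = Suc i" if "i < j" "j < length xs" "{xs!i, xs!j} \<in> H" for i j
  proof (rule ccontr)
    assume nj: "j \<noteq> Suc i"
    have si: "Suc i < length xs" using that by simp
    have e1: "{xs!i, xs!Suc i} \<in> H" using pe[OF si] .
    have ne: "{xs!i, xs!Suc i} \<noteq> {xs!i, xs!j}"
      using dxs si that nj by (auto simp: doubleton_eq_iff nth_eq_iff_index_eq)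
    show False
    proof (cases i)
      case 0
      then show False using uniq[OF e1 that(3)] ne x0 by simp
    next
      case (Suc k)
      have e3: "{xs!k, xs!i} \<in> H" using pe[of k] si Suc by simp
      have "{xs!k, xs!i} \<noteq> {xs!i, xs!Suc i}" "{xs!k, xs!i} \<noteq> {xs!i, xs!j}"
        using dxs si that Suc by (auto simp: doubleton_eq_iff nth_eq_iff_index_eq)
      then show False using d2[OF e3 e1 that(3), of "xs!i"] ne by auto
    qed
  qed
  have pC: "path_edges xs = C"
  proof (intro set_eqI iffI)
    fix e assume "e \<in> path_edges xs"
    then obtain i where i: "Suc i < length xs" "e = {xs!i, xs!Suc i}" by (auto simp: pe_mem)
    then show "e \<in> C" using pe[OF i(1)] reach_list[of i] unfolding C_def by auto
  next
    fix e assume "e \<in> C"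
    then obtain u where eH: "e \<in> H" and u: "u \<in> e" "?R\<^sup>*\<^sup>* v u" unfolding C_def by blast
    obtain p q where pq: "p \<noteq> q" "e = {p,q}" using eH HE edgeE by blast
    have "?R\<^sup>*\<^sup>* v p \<and> ?R\<^sup>*\<^sup>* v q"
    proof (cases "u = p")
      case True then show ?thesis using u eH pq by (auto intro: rtranclp.rtrancl_into_rtrancl)
    next
      case False then have "u = q" using u pq by auto
      then show ?thesis using u eH pq by (auto simp: insert_commute intro: rtranclp.rtrancl_into_rtrancl)
    qed
    then have "p \<in> set xs" "q \<in> set xs" using reach_in by auto
    then obtain i j where ij: "i < length xs" "xs!i = p" "j < length xs" "xs!j = q"
      by (auto simp: in_set_conv_nth)
    have "i \<noteq> j" using ij pq by auto
    then show "e \<in> path_edges xs"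
    proof (cases "i < j")
      case True
      then have "j = Suc i" using adj[of i j] ij eH pq by auto
      then show ?thesis using ij pq by (auto simp: pe_mem)
    next
      case False
      then have "j < i" using \<open>i \<noteq> j\<close> by simp
      then have "i = Suc j" using adj[of j i] ij eH pq by (auto simp: insert_commute)
      then show ?thesis using ij pq by (auto simp: pe_mem insert_commute)
    qed
  qed
  moreover have intr: "\<forall>u\<in>set xs. u \<noteq> hd xs \<longrightarrow> u \<noteq> last xs \<longrightarrow> (\<exists>e1\<in>H. \<exists>e2\<in>H. e1 \<noteq> e2 \<and> u \<in> e1 \<and> u \<in> e2)"
  proof (intro ballI impI)
    fix u assume u: "u \<in> set xs" "u \<noteq> hd xs" "u \<noteq> last xs"
    then obtain i where i: "i < length xs" "xs!i = u" by (auto simp: in_set_conv_nth)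
    have "i \<noteq> 0" proof assume "i = 0" then show False using i u nexs by (simp add: hd_conv_nth) qed
    then obtain k where k: "i = Suc k" by (cases i) auto
    have "Suc i \<noteq> length xs"
    proof
      assume h: "Suc i = length xs"
      have "last xs = xs ! (length xs - 1)" by (rule last_conv_nth[OF nexs])
      also have "length xs - 1 = i" using h by simp
      finally have "last xs = u" using i by simp
      then show False using u by simp
    qed
    then have si: "Suc i < length xs" using i by simp
    have sk: "Suc k < length xs" using si k by simp
    have A1: "{xs!k, u} \<in> H" using pe[OF sk] k i(2) by simp
    have A2: "{u, xs!Suc i} \<in> H" using pe[OF si] i(2) by simp
    have A3: "{xs!k, u} \<noteq> {u, xs!Suc i}"
    proof -
      have n1: "xs!k \<noteq> xs!Suc i" using dxs si k by (simp add: nth_eq_iff_index_eq)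
      have n2: "xs!k \<noteq> xs!i" using dxs si k by (simp add: nth_eq_iff_index_eq)
      show ?thesis using n1 n2 i(2) by (auto simp: doubleton_eq_iff)
    qed
    show "\<exists>e1\<in>H. \<exists>e2\<in>H. e1 \<noteq> e2 \<and> u \<in> e1 \<and> u \<in> e2"
      by (rule bexI[OF _ A1], rule bexI[OF _ A2]) (use A3 in simp)
  qed
  ultimately show ?thesis using dxs nexs hxs sxs by (intro exI[of _ xs]) simp
qed

end


context G4 begin

definition M :: "('a set \<Rightarrow> nat) \<Rightarrow> 'a \<Rightarrow> nat \<Rightarrow> bool" where
  "M f v c \<longleftrightarrow> c \<in> {1..5} \<and> colors_at E f v = {1..5} - {c}"

lemma ex_M: assumes pf: "proper_edge_coloring E f 5" and v: "v \<in> V" shows "\<exists>c. M f v c"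
proof -
  let ?I = "{e\<in>E. v \<in> e}"
  have cI: "card ?I = 4" using reg v unfolding regular_def by blast
  have inj: "inj_on f ?I" using proper_eq[OF pf] by (auto simp: inj_on_def)
  have c4: "card (colors_at E f v) = 4" unfolding colors_at_def using card_image[OF inj] cI by simp
  have sub: "colors_at E f v \<subseteq> {1..5}" using pf unfolding colors_at_def proper_edge_coloring_def by auto
  have "card ({1..5::nat} - colors_at E f v) = 1"
    using card_Diff_subset[OF _ sub] c4 finite_subset[OF sub] by simp
  then obtain c where c: "{1..5::nat} - colors_at E f v = {c}" using card_1_singletonE by blast
  then have "c \<in> {1..5}" by blast
  moreover have "colors_at E f v = {1..5} - {c}" using c sub by blast
  ultimately show ?thesis unfolding M_def by blast
qed

lemma M_unique: "M f v c \<Longrightarrow> M f v d \<Longrightarrow> c = d"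
  unfolding M_def by blast

lemma swap_inj: "inj (swap_colors a b)"
  by (metis swap_inv injI)

lemma M_swap: assumes "M f v c" "a \<in> {1..5}" "b \<in> {1..5}"
    "colors_at E g v = swap_colors a b ` colors_at E f v"
  shows "M g v (swap_colors a b c)"
proof -
  have "swap_colors a b ` ({1..5} - {c}) = swap_colors a b ` {1..5} - {swap_colors a b c}"
    using swap_inj by (simp add: image_set_diff)
  also have "swap_colors a b ` {1..5} = {1..5}" using assms(2,3) by (rule swap_same)
  finally show ?thesis using assms unfolding M_def by (auto simp: swap_colors_def)
qed

lemma kempe:
  assumes pf: "proper_edge_coloring E f 5" and vV: "v \<in> V" and Mv: "M f v b"
    and ab: "a \<in> {3,4,5}" "b \<in> {3,4,5}" "a \<noteq> b"
  shows "\<exists>g. path_interchange_345 V E f g \<and> proper_edge_coloring E g 5 \<and>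
     (\<forall>e. f e \<notin> {a,b} \<longrightarrow> g e = f e) \<and> M g v a \<and>
     (\<exists>w. \<forall>u. u \<noteq> v \<longrightarrow> u \<noteq> w \<longrightarrow> colors_at E g u = colors_at E f u) \<and>
     (\<forall>u c. M f u c \<longrightarrow> M g u c \<or> M g u (swap_colors a b c)) \<and>
     (\<forall>u. colors_at E g u \<noteq> colors_at E f u \<longrightarrow> (\<lambda>x y. {x, y} \<in> bicolored_edges E f a b)\<^sup>*\<^sup>* v u)"
proof -
  define H where "H = bicolored_edges E f a b"
  let ?R = "\<lambda>x y. {x, y} \<in> H"
  define C where "C = {e\<in>H. \<exists>u\<in>e. ?R\<^sup>*\<^sup>* v u}"
  define g where "g = (\<lambda>e. if e \<in> C then swap_colors a b (f e) else f e)"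
  have HE: "H \<subseteq> E" unfolding H_def bicolored_edges_def by auto
  have Hc: "e \<in> H \<longleftrightarrow> e \<in> E \<and> f e \<in> {a,b}" for e unfolding H_def bicolored_edges_def by auto
  have bnot: "b \<notin> colors_at E f v" using Mv unfolding M_def by simp
  have a15: "a \<in> {1..5}" using ab(1) by auto
  have ain: "a \<in> colors_at E f v" using Mv a15 ab(3) unfolding M_def by simp
  then obtain e0 where e0: "e0 \<in> E" "v \<in> e0" "f e0 = a" unfolding colors_at_def by blast
  have e0H: "e0 \<in> H" using e0 unfolding Hc by simp
  have uniq: "e1 = e2" if "e1 \<in> H" "e2 \<in> H" "v \<in> e1" "v \<in> e2" for e1 e2
  proof -
    have E12: "e1 \<in> E" "e2 \<in> E" "f e1 \<in> {a,b}" "f e2 \<in> {a,b}" using that(1,2) unfolding Hc by simp_all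
    have "f e1 \<in> colors_at E f v" "f e2 \<in> colors_at E f v"
      unfolding colors_at_def using E12 that(3,4) by blast+
    then have "f e1 \<noteq> b" "f e2 \<noteq> b" using bnot by metis+
    then have "f e1 = f e2" using E12 by simp
    then show ?thesis by (rule proper_eq[OF pf E12(1,2) that(3,4)])
  qed
  have ex: "\<exists>xs. distinct xs \<and> xs \<noteq> [] \<and> hd xs = v \<and> set xs \<subseteq> V \<and> path_edges xs = C \<and>
     (\<forall>u\<in>set xs. u \<noteq> hd xs \<longrightarrow> u \<noteq> last xs \<longrightarrow> (\<exists>e1\<in>H. \<exists>e2\<in>H. e1 \<noteq> e2 \<and> u \<in> e1 \<and> u \<in> e2))"
    unfolding C_def H_def by (rule chain[where f=f and a=a and b=b and v=v, OF pf vV uniq[unfolded H_def]])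
  then obtain xs where dxs: "distinct xs" and nexs: "xs \<noteq> []" and hxs: "hd xs = v" and sxs: "set xs \<subseteq> V"
      and pC: "path_edges xs = C"
      and intr: "\<forall>u\<in>set xs. u \<noteq> hd xs \<longrightarrow> u \<noteq> last xs \<longrightarrow> (\<exists>e1\<in>H. \<exists>e2\<in>H. e1 \<noteq> e2 \<and> u \<in> e1 \<and> u \<in> e2)"
    by (elim exE conjE)
  have e0C: "e0 \<in> C" using e0H e0 unfolding C_def by blast
  have CH: "C \<subseteq> H" unfolding C_def by blast
  have reach_of_touch: "?R\<^sup>*\<^sup>* v u" if eC: "e \<in> C" and ue: "u \<in> e" for e u
  proof -
    obtain x where x: "x \<in> e" "?R\<^sup>*\<^sup>* v x" "e \<in> H" using eC unfolding C_def by blast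
    obtain p q where "e = {p,q}" using x HE edgeE by blast
    then have "e = {x,u} \<or> u = x" using x ue by auto
    then show ?thesis
    proof
      assume "e = {x,u}"
      then have "?R x u" using x(3) by simp
      then show ?thesis using x(2) by (rule rtranclp.rtrancl_into_rtrancl[rotated])
    next
      assume "u = x" then show ?thesis using x(2) by simp
    qed
  qed
  have closed: "e2 \<in> C" if "e1 \<in> C" "e2 \<in> H" "u \<in> e1" "u \<in> e2" for e1 e2 u
    using reach_of_touch[OF that(1,3)] that(2,4) unfolding C_def by blast
  have col: "colors_at E g u = swap_colors a b ` colors_at E f u" if tc: "\<exists>e\<in>C. u \<in> e" for u
  proof -
    have "g e = swap_colors a b (f e)" if eI: "e \<in> {e\<in>E. u \<in> e}" for e
    proof (cases "e \<in> C")
      case True then show ?thesis by (simp add: g_def)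
    next
      case False
      have "f e \<notin> {a,b}"
      proof
        assume "f e \<in> {a,b}"
        then have "e \<in> H" using eI Hc by simp
        obtain e' where "e' \<in> C" "u \<in> e'" using tc by blast
        then have "e \<in> C" using closed[of e' e u] \<open>e \<in> H\<close> eI by simp
        then show False using False by simp
      qed
      then show ?thesis using False by (auto simp: g_def swap_colors_def)
    qed
    then show ?thesis unfolding colors_at_def image_image by (rule image_cong[OF refl])
  qed
  have col2: "colors_at E g u = colors_at E f u" if "\<not>(\<exists>e\<in>C. u \<in> e)" for u
    unfolding colors_at_def using that by (intro image_cong) (auto simp: g_def)
  have ab15: "a \<in> {1..5}" "b \<in> {1..5}" using ab by auto
  have Mg: "M g u c \<or> M g u (swap_colors a b c)" if "M f u c" for u c
  proof (cases "\<exists>e\<in>C. u \<in> e")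
    case True then show ?thesis using col M_swap[OF that ab15] by blast
  next
    case False
    then have "colors_at E g u = colors_at E f u" using col2 by blast
    then show ?thesis using that by (simp add: M_def)
  qed
  have sb: "swap_colors a b b = a" by (simp add: swap_colors_def)
  have tv: "\<exists>e\<in>C. v \<in> e" using e0C e0 by blast
  have Mga: "M g v a"
    using M_swap[OF Mv ab15 col[OF tv]] sb by simp
  have W: "\<forall>u. u \<noteq> v \<longrightarrow> u \<noteq> last xs \<longrightarrow> colors_at E g u = colors_at E f u"
  proof (intro allI impI)
    fix u assume u: "u \<noteq> v" "u \<noteq> last xs"
    show "colors_at E g u = colors_at E f u"
    proof (cases "\<exists>e\<in>C. u \<in> e")
      case False then show ?thesis using col2 by blast
    next
      case True
      then obtain e where e: "e \<in> C" "u \<in> e" by blast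
      then obtain i where "Suc i < length xs" "e = {xs!i, xs!Suc i}" using pC pe_mem[of e xs] by auto
      then have "u \<in> set xs" using e by (auto intro: nth_mem)
      then obtain e1 e2 where ee: "e1 \<in> H" "e2 \<in> H" "e1 \<noteq> e2" "u \<in> e1" "u \<in> e2"
        using intr u hxs by blast
      then have E12: "e1 \<in> E" "e2 \<in> E" "f e1 \<in> {a,b}" "f e2 \<in> {a,b}" using Hc by auto
      have "f e1 \<noteq> f e2" using proper_eq[OF pf E12(1,2) ee(4,5)] ee(3) by blast
      then have "a \<in> colors_at E f u" "b \<in> colors_at E f u" unfolding colors_at_def
        using E12 ee(4,5) by (auto simp: image_iff)
      then have "swap_colors a b ` colors_at E f u = colors_at E f u" by (rule swap_same)
      then show ?thesis using col[OF True] by simp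
    qed
  qed
  have pg: "proper_edge_coloring E g 5"
    unfolding proper_edge_coloring_def
  proof (intro conjI ballI impI)
    fix e assume "e \<in> E" then show "g e \<in> {1..5}"
      using pf ab Hc CH unfolding proper_edge_coloring_def g_def swap_colors_def by auto
  next
    fix e1 e2 assume e1: "e1 \<in> E" and e2: "e2 \<in> E" and e: "e1 \<noteq> e2 \<and> e1 \<inter> e2 \<noteq> {}"
    then obtain u where u: "u \<in> e1" "u \<in> e2" by blast
    have fne: "f e1 \<noteq> f e2" using pf e1 e2 e unfolding proper_edge_coloring_def by blast
    show "g e1 \<noteq> g e2"
    proof (cases "e1 \<in> C")
      case c1: True
      show ?thesis
      proof (cases "e2 \<in> C")
        case True then show ?thesis using c1 fne swap_inj by (simp add: g_def inj_eq)
      next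
        case False
        then have "e2 \<notin> H" using closed[of e1 e2 u] c1 u by blast
        then have "f e2 \<notin> {a,b}" using e2 Hc by blast
        moreover have "f e1 \<in> {a,b}" using c1 CH Hc by blast
        ultimately show ?thesis using c1 False by (auto simp: g_def swap_colors_def)
      qed
    next
      case c1: False
      show ?thesis
      proof (cases "e2 \<in> C")
        case True
        then have "e1 \<notin> H" using closed[of e2 e1 u] c1 u by blast
        then have "f e1 \<notin> {a,b}" using e1 Hc by blast
        moreover have "f e2 \<in> {a,b}" using True CH Hc by blast
        ultimately show ?thesis using c1 True by (auto simp: g_def swap_colors_def)
      next
        case False then show ?thesis using c1 fne by (simp add: g_def)
      qed
    qed
  qed
  have bc: "bicolored_component E f a b C" unfolding bicolored_component_def
  proof (intro conjI exI[of _ v])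
    show "C \<noteq> {}" using e0C by blast
    show "C = {e \<in> bicolored_edges E f a b. \<exists>u\<in>e. (\<lambda>x y. {x, y} \<in> bicolored_edges E f a b)\<^sup>*\<^sup>* v u}"
      by (simp add: C_def H_def)
  qed
  have ip: "\<exists>xs. is_path V E xs \<and> path_edges xs = C"
    using dxs nexs sxs pC CH HE unfolding is_path_def by (intro exI[of _ xs]) simp
  have pi: "path_interchange_345 V E f g"
    unfolding path_interchange_345_def using ab bc ip
    by (intro exI[of _ a] exI[of _ b] exI[of _ C]) (simp add: g_def)
  have pres: "\<forall>e. f e \<notin> {a,b} \<longrightarrow> g e = f e" using CH Hc by (auto simp: g_def)
  have rch: "\<forall>u. colors_at E g u \<noteq> colors_at E f u \<longrightarrow> (\<lambda>x y. {x, y} \<in> bicolored_edges E f a b)\<^sup>*\<^sup>* v u"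
    using col2 reach_of_touch unfolding H_def by blast
  show ?thesis using pi pg pres Mga W Mg rch by blast
qed

lemma kempe1:
  assumes pf: "proper_edge_coloring E f 5" and ed: "{v,x} \<in> E" "f {v,x} = a"
    and Mv: "M f v b" and Mx: "M f x b"
    and ab: "a \<in> {3,4,5}" "b \<in> {3,4,5}" "a \<noteq> b"
  shows "\<exists>g. path_interchange_345 V E f g \<and> proper_edge_coloring E g 5 \<and>
     (\<forall>e. f e \<notin> {a,b} \<longrightarrow> g e = f e) \<and> M g v a \<and>
     (\<forall>u. u \<noteq> v \<longrightarrow> u \<noteq> x \<longrightarrow> colors_at E g u = colors_at E f u)"
proof -
  have vV: "v \<in> V" using edge2[OF ed(1)] by simp
  obtain g where g: "path_interchange_345 V E f g" "proper_edge_coloring E g 5"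
     "\<forall>e. f e \<notin> {a,b} \<longrightarrow> g e = f e" "M g v a"
     "\<forall>u. colors_at E g u \<noteq> colors_at E f u \<longrightarrow> (\<lambda>x y. {x, y} \<in> bicolored_edges E f a b)\<^sup>*\<^sup>* v u"
    using kempe[OF pf vV Mv ab] by blast
  have bv: "b \<notin> colors_at E f v" "b \<notin> colors_at E f x" using Mv Mx unfolding M_def by auto
  have "u \<in> {v,x}" if "(\<lambda>x y. {x, y} \<in> bicolored_edges E f a b)\<^sup>*\<^sup>* v u" for u
    using that
  proof (induction rule: rtranclp_induct)
    case base then show ?case by simp
  next
    case (step y z)
    have yz: "{y,z} \<in> E" "f {y,z} \<in> {a,b}" using step.hyps(2) unfolding bicolored_edges_def by auto
    have "f {y,z} \<noteq> b" using bv yz(1) step.IH unfolding colors_at_def by (auto simp: image_iff)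
    then have "f {y,z} = f {v,x}" using yz ed by auto
    then have "{y,z} = {v,x}" using proper_eq[OF pf yz(1) ed(1), of y] step.IH by auto
    then show ?case by (auto simp: doubleton_eq_iff)
  qed
  then show ?thesis using g by blast
qed

end


context G4 begin

abbreviation ST where "ST \<equiv> (path_interchange_345 V E)\<^sup>*\<^sup>*"

definition pres :: "('a set \<Rightarrow> nat) \<Rightarrow> ('a set \<Rightarrow> nat) \<Rightarrow> bool" where
  "pres f g \<longleftrightarrow> (\<forall>e. f e \<in> {1,2} \<longrightarrow> g e = f e)"

definition Good :: "('a set \<Rightarrow> nat) \<Rightarrow> 'a \<Rightarrow> 'a \<Rightarrow> bool" where
  "Good g u w \<longleftrightarrow> (\<exists>c. M g u c \<and> M g w c)"

lemma Good_sym: "Good g u w \<Longrightarrow> Good g w u" unfolding Good_def by blast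

lemma M_cong: "colors_at E g u = colors_at E f u \<Longrightarrow> M f u c \<Longrightarrow> M g u c" by (simp add: M_def)
lemma M_same: "M f u c \<Longrightarrow> M g u c \<Longrightarrow> colors_at E g u = colors_at E f u" by (simp add: M_def)

lemma pres_trans: "pres f g \<Longrightarrow> pres g h \<Longrightarrow> pres f h" unfolding pres_def by metis
lemma pres_refl: "pres f f" unfolding pres_def by simp

lemma K:
  assumes pf: "proper_edge_coloring E f 5" and vV: "v \<in> V" and Mv: "M f v b"
    and ab: "a \<in> {3,4,5}" "b \<in> {3,4,5}" "a \<noteq> b"
  shows "\<exists>g. ST f g \<and> proper_edge_coloring E g 5 \<and> pres f g \<and> M g v a \<and>
     (\<exists>w. \<forall>u. u \<noteq> v \<longrightarrow> u \<noteq> w \<longrightarrow> colors_at E g u = colors_at E f u) \<and>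
     (\<forall>u c. M f u c \<longrightarrow> M g u c \<or> M g u (swap_colors a b c)) \<and>
     (\<forall>e. f e \<notin> {a,b} \<longrightarrow> g e = f e)"
proof -
  obtain g where g: "path_interchange_345 V E f g" "proper_edge_coloring E g 5"
     "\<forall>e. f e \<notin> {a,b} \<longrightarrow> g e = f e" "M g v a"
     "\<exists>w. \<forall>u. u \<noteq> v \<longrightarrow> u \<noteq> w \<longrightarrow> colors_at E g u = colors_at E f u"
     "\<forall>u c. M f u c \<longrightarrow> M g u c \<or> M g u (swap_colors a b c)"
    using kempe[OF pf vV Mv ab] by blast
  have "pres f g" unfolding pres_def using g(3) ab by auto
  then show ?thesis using g r_into_rtranclp[of "path_interchange_345 V E", OF g(1)] by blast
qed

lemma K1:
  assumes pf: "proper_edge_coloring E f 5" and ed: "{v,x} \<in> E" "f {v,x} = a"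
    and Mv: "M f v b" and Mx: "M f x b"
    and ab: "a \<in> {3,4,5}" "b \<in> {3,4,5}" "a \<noteq> b"
  shows "\<exists>g. ST f g \<and> proper_edge_coloring E g 5 \<and> pres f g \<and> M g v a \<and>
     (\<forall>u. u \<noteq> v \<longrightarrow> u \<noteq> x \<longrightarrow> colors_at E g u = colors_at E f u)"
proof -
  obtain g where g: "path_interchange_345 V E f g" "proper_edge_coloring E g 5"
     "\<forall>e. f e \<notin> {a,b} \<longrightarrow> g e = f e" "M g v a"
     "\<forall>u. u \<noteq> v \<longrightarrow> u \<noteq> x \<longrightarrow> colors_at E g u = colors_at E f u"
    using kempe1[OF pf ed Mv Mx ab] by blast
  have "pres f g" unfolding pres_def using g(3) ab by auto
  then show ?thesis using g r_into_rtranclp[of "path_interchange_345 V E", OF g(1)] by blast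
qed

lemma easy:
  assumes pf: "proper_edge_coloring E f 5" and u2: "u2 \<in> V" and d: "u1 \<noteq> u2" "u2 \<noteq> u3" "u1 \<noteq> u3"
    and M1: "M f u1 a" and M2: "M f u2 b" and M3: "M f u3 a"
    and ab: "a \<in> {3,4,5}" "b \<in> {3,4,5}" "a \<noteq> b"
  shows "\<exists>g. ST f g \<and> proper_edge_coloring E g 5 \<and> pres f g \<and> (Good g u1 u2 \<or> Good g u2 u3)"
proof -
  obtain g w where g: "ST f g" "proper_edge_coloring E g 5" "pres f g" "M g u2 a"
    and w: "\<forall>u. u \<noteq> u2 \<longrightarrow> u \<noteq> w \<longrightarrow> colors_at E g u = colors_at E f u"
    using K[OF pf u2 M2 ab] by blast
  show ?thesis
  proof (cases "u1 = w")
    case True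
    then have "colors_at E g u3 = colors_at E f u3" using w[rule_format, of u3] True d by auto
    then have "M g u3 a" using M3 M_cong by blast
    then show ?thesis using g unfolding Good_def by blast
  next
    case False
    then have "colors_at E g u1 = colors_at E f u1" using w[rule_format, of u1] False d by auto
    then have "M g u1 a" using M1 M_cong by blast
    then show ?thesis using g unfolding Good_def by blast
  qed
qed

lemma A2:
  assumes pf: "proper_edge_coloring E f 5"
    and d: "u1 \<noteq> u2" "u2 \<noteq> u3" "u1 \<noteq> u3" "x \<noteq> u1" "x \<noteq> u3"
    and ed: "{u2,x} \<in> E" "f {u2,x} = a"
    and M1: "M f u1 a" and M2: "M f u2 c" and M3: "M f u3 b" and Mx: "M f x e"
    and abc: "a \<in> {3,4,5}" "b \<in> {3,4,5}" "c \<in> {3,4,5}" "a \<noteq> b" "a \<noteq> c" "b \<noteq> c"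
    and e: "e \<in> {3,4,5}" "e \<noteq> a"
  shows "\<exists>g. ST f g \<and> proper_edge_coloring E g 5 \<and> pres f g \<and> (Good g u1 u2 \<or> Good g u2 u3)"
proof -
  have xu2: "x \<noteq> u2" using edge2(3)[OF ed(1)] by simp
  have xV: "x \<in> V" using edge2(2)[OF ed(1)] by simp
  have "e = b \<or> e = c" using abc e by auto
  then show ?thesis
  proof
    assume "e = c"
    then obtain g where g: "ST f g" "proper_edge_coloring E g 5" "pres f g" "M g u2 a"
      "\<forall>u. u \<noteq> u2 \<longrightarrow> u \<noteq> x \<longrightarrow> colors_at E g u = colors_at E f u"
      using K1[OF pf ed M2 Mx[unfolded \<open>e = c\<close>] abc(1,3,5)] by blast
    then have "colors_at E g u1 = colors_at E f u1" using g(5)[rule_format, of u1] d by auto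
    then have "M g u1 a" using M1 M_cong by blast
    then show ?thesis using g unfolding Good_def by blast
  next
    assume eb: "e = b"
    obtain g1 w where g1: "ST f g1" "proper_edge_coloring E g1 5" "pres f g1" "M g1 x c"
      and w: "\<forall>u. u \<noteq> x \<longrightarrow> u \<noteq> w \<longrightarrow> colors_at E g1 u = colors_at E f u"
      and sw: "\<forall>u d. M f u d \<longrightarrow> M g1 u d \<or> M g1 u (swap_colors c b d)"
      and ot: "\<forall>e. f e \<notin> {c,b} \<longrightarrow> g1 e = f e"
      using K[OF pf xV Mx[unfolded eb] abc(3) abc(2) abc(6)[symmetric]] by blast
    have s1: "swap_colors c b c = b" "swap_colors c b b = c" by (auto simp: swap_colors_def)
    show ?thesis
    proof (cases "colors_at E g1 u2 = colors_at E f u2")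
      case False
      then have "u2 = w" using w[rule_format, of u2] xu2 by auto
      then have "colors_at E g1 u3 = colors_at E f u3" using w[rule_format, of u3] d by auto
      then have "M g1 u3 b" using M3 M_cong by blast
      moreover have "M g1 u2 b"
      proof -
        have "M g1 u2 c \<or> M g1 u2 (swap_colors c b c)" using sw M2 by blast
        then show ?thesis using False M_same[OF M2] s1 by auto
      qed
      ultimately show ?thesis using g1 unfolding Good_def by blast
    next
      case u2same: True
      then have M2': "M g1 u2 c" using M2 M_cong by blast
      show ?thesis
      proof (cases "colors_at E g1 u3 = colors_at E f u3")
        case False
        have "M g1 u3 b \<or> M g1 u3 (swap_colors c b b)" using sw M3 by blast
        then have "M g1 u3 c" using False M_same[OF M3] s1 by auto
        then show ?thesis using g1 M2' unfolding Good_def by blast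
      next
        case True
        have "swap_colors c b a = a" using abc by (auto simp: swap_colors_def)
        then have M1': "M g1 u1 a" using sw M1 by metis
        have ed': "g1 {u2,x} = a" using ot ed abc by auto
        obtain g2 where g2: "ST g1 g2" "proper_edge_coloring E g2 5" "pres g1 g2" "M g2 u2 a"
          "\<forall>u. u \<noteq> u2 \<longrightarrow> u \<noteq> x \<longrightarrow> colors_at E g2 u = colors_at E g1 u"
          using K1[OF g1(2) ed(1) ed' M2' g1(4) abc(1,3,5)] by blast
        then have "colors_at E g2 u1 = colors_at E g1 u1" using g2(5)[rule_format, of u1] d by auto
        then have "M g2 u1 a" using M1' M_cong by blast
        moreover have "ST f g2" using g1(1) g2(1) by (rule rtranclp_trans)
        moreover have "pres f g2" using g1(3) g2(3) by (rule pres_trans)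
        ultimately show ?thesis using g2 unfolding Good_def by blast
      qed
    qed
  qed
qed

end


lemma card1: assumes "mi \<in> {3,4,5}" "mj \<in> {3,4,5}" "mi \<noteq> mj"
  shows "card ((({1..5::nat}-{mi}) \<inter> ({1..5}-{mj})) - {1,2}) = 1"
proof -
  have "(({1..5::nat}-{mi}) \<inter> ({1..5}-{mj})) - {1,2} = {3,4,5} - {mi,mj}" by auto
  moreover have "card ({3,4,5::nat} - {mi,mj}) = 1" using assms by auto
  ultimately show ?thesis by simp
qed

context G4 begin

lemma PB:
  assumes pf: "proper_edge_coloring E f 5" and V: "u1 \<in> V" "u2 \<in> V" "u3 \<in> V" "u4 \<in> V"
    and d: "u1 \<noteq> u2" "u1 \<noteq> u3" "u1 \<noteq> u4" "u2 \<noteq> u3" "u2 \<noteq> u4" "u3 \<noteq> u4"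
    and M: "M f u1 m1" "M f u2 m2" "M f u3 m3" "M f u4 m4"
    and m: "m1 \<in> {3,4,5}" "m2 \<in> {3,4,5}" "m3 \<in> {3,4,5}" "m4 \<in> {3,4,5}"
  shows "\<exists>g. ST f g \<and> proper_edge_coloring E g 5 \<and> pres f g \<and> (Good g u1 u2 \<or> Good g u2 u3 \<or> Good g u3 u4)"
proof -
  have refl: "ST f f" by simp
  show ?thesis
  proof (cases "m1 = m2 \<or> m2 = m3 \<or> m3 = m4")
    case True
    then have "Good f u1 u2 \<or> Good f u2 u3 \<or> Good f u3 u4" using M unfolding Good_def by auto
    then show ?thesis using refl pf pres_refl by blast
  next
    case n1: False
    show ?thesis
    proof (cases "m1 = m3")
      case True
      have n12: "m1 \<noteq> m2" using n1 by simp
      obtain g where "ST f g" "proper_edge_coloring E g 5" "pres f g" "Good g u1 u2 \<or> Good g u2 u3"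
        using easy[OF pf V(2) d(1) d(4) d(2) M(1) M(2) M(3)[folded True] m(1) m(2) n12] by blast
      then show ?thesis by blast
    next
      case n2: False
      show ?thesis
      proof (cases "m2 = m4")
        case True
        have n23: "m2 \<noteq> m3" using n1 by simp
        obtain g where "ST f g" "proper_edge_coloring E g 5" "pres f g" "Good g u2 u3 \<or> Good g u3 u4"
          using easy[OF pf V(3) d(4) d(6) d(5) M(2) M(3) M(4)[folded True] m(2) m(3) n23] by blast
        then show ?thesis by blast
      next
        case n3: False
        have m41: "m4 = m1" using n1 n2 n3 m by auto
        have s: "swap_colors m3 m1 m2 = m2" "swap_colors m3 m1 m3 = m1" "swap_colors m3 m1 m1 = m3"
          using n1 n2 n3 by (auto simp: swap_colors_def)
        obtain g1 w where g1: "ST f g1" "proper_edge_coloring E g1 5" "pres f g1" "M g1 u1 m3"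
          and w: "\<forall>u. u \<noteq> u1 \<longrightarrow> u \<noteq> w \<longrightarrow> colors_at E g1 u = colors_at E f u"
          and sw: "\<forall>u d. M f u d \<longrightarrow> M g1 u d \<or> M g1 u (swap_colors m3 m1 d)"
          using K[OF pf V(1) M(1) m(3) m(1) n2[symmetric]] by blast
        have "M g1 u2 m2 \<or> M g1 u2 (swap_colors m3 m1 m2)" using sw M(2) by blast
        then have M2': "M g1 u2 m2" using s by simp
        show ?thesis
        proof (cases "colors_at E g1 u3 = colors_at E f u3")
          case False
          then have "u3 = w" using w[rule_format, of u3] d by auto
          then have "colors_at E g1 u4 = colors_at E f u4" using w[rule_format, of u4] d by auto
          then have "M g1 u4 m1" using M(4) m41 M_cong by blast
          moreover have "M g1 u3 m1"
          proof -
            have "M g1 u3 m3 \<or> M g1 u3 (swap_colors m3 m1 m3)" using sw M(3) by blast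
            then show ?thesis using False M_same[OF M(3)] s by auto
          qed
          ultimately show ?thesis using g1 unfolding Good_def by blast
        next
          case u3same: True
          then have M3': "M g1 u3 m3" using M(3) M_cong by blast
          show ?thesis
          proof (cases "colors_at E g1 u4 = colors_at E f u4")
            case False
            have "M g1 u4 m1 \<or> M g1 u4 (swap_colors m3 m1 m1)" using sw M(4) m41 by blast
            then have "M g1 u4 m3" using False M_same[OF M(4)] s m41 by auto
            then show ?thesis using g1 M3' unfolding Good_def by blast
          next
            case True
            have n32: "m3 \<noteq> m2" using n1 by auto
            obtain g2 where g2: "ST g1 g2" "proper_edge_coloring E g2 5" "pres g1 g2" "Good g2 u1 u2 \<or> Good g2 u2 u3"
              using easy[OF g1(2) V(2) d(1) d(4) d(2) g1(4) M2' M3' m(3) m(2) n32] by blast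
            moreover have "ST f g2" using g1(1) g2(1) by (rule rtranclp_trans)
            moreover have "pres f g2" using g1(3) g2(3) by (rule pres_trans)
            ultimately show ?thesis by blast
          qed
        qed
      qed
    qed
  qed
qed

lemma PA:
  assumes pf: "proper_edge_coloring E f 5" and V: "u1 \<in> V" "u2 \<in> V" "u3 \<in> V"
    and d: "u1 \<noteq> u2" "u1 \<noteq> u3" "u2 \<noteq> u3"
    and M: "M f u1 m1" "M f u2 m2" "M f u3 m3"
    and m: "m1 \<in> {3,4,5}" "m2 \<in> {3,4,5}" "m3 \<in> {3,4,5}"
    and ed: "{u1,u2} \<in> E" "{u2,u3} \<in> E" "f {u1,u2} \<in> {1,2}" "f {u2,u3} \<in> {1,2}"
    and h: "\<not>(m1 \<noteq> m2 \<and> m2 \<noteq> m3 \<and> m1 \<noteq> m3) \<or> (\<exists>x. {u2,x} \<in> E \<and> x \<noteq> u1 \<and> x \<noteq> u3 \<and> (\<exists>e\<in>{3,4,5}. M f x e))"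
  shows "\<exists>g. ST f g \<and> proper_edge_coloring E g 5 \<and> pres f g \<and> (Good g u1 u2 \<or> Good g u2 u3)"
proof -
  have refl: "ST f f" by simp
  show ?thesis
  proof (cases "m1 = m2 \<or> m2 = m3")
    case True
    then have "Good f u1 u2 \<or> Good f u2 u3" using M unfolding Good_def by auto
    then show ?thesis using refl pf pres_refl by blast
  next
    case n1: False
    show ?thesis
    proof (cases "m1 = m3")
      case True
      have n12: "m1 \<noteq> m2" using n1 by simp
      show ?thesis
        using easy[OF pf V(2) d(1) d(3) d(2) M(1) M(2) M(3)[folded True] m(1) m(2) n12] by blast
    next
      case n2: False
      then obtain x e where x: "{u2,x} \<in> E" "x \<noteq> u1" "x \<noteq> u3" "e \<in> {3,4,5}" "M f x e"
        using h n1 by blast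
      define dd where "dd = f {u2,x}"
      have "dd \<in> colors_at E f u2" unfolding dd_def colors_at_def using x(1) by auto
      then have dd1: "dd \<in> {1..5}" "dd \<noteq> m2" using M(2) unfolding M_def by auto
      have xu2: "x \<noteq> u2" using edge2(3)[OF x(1)] by simp
      have "f {u1,u2} \<noteq> f {u2,u3}"
      proof
        assume "f {u1,u2} = f {u2,u3}"
        then have "{u1,u2} = {u2,u3}" using proper_eq[OF pf ed(1,2), of u2] by simp
        then show False using d by (auto simp: doubleton_eq_iff)
      qed
      moreover have "dd \<noteq> f {u1,u2}"
      proof
        assume "dd = f {u1,u2}"
        then have "{u2,x} = {u1,u2}" using proper_eq[OF pf x(1) ed(1), of u2] dd_def by simp
        then show False using x xu2 d by (auto simp: doubleton_eq_iff)
      qed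
      moreover have "dd \<noteq> f {u2,u3}"
      proof
        assume "dd = f {u2,u3}"
        then have "{u2,x} = {u2,u3}" using proper_eq[OF pf x(1) ed(2), of u2] dd_def by simp
        then show False using x xu2 d by (auto simp: doubleton_eq_iff)
      qed
      ultimately have "dd \<notin> {1,2}" using ed(3,4) by auto
      then have ddm: "dd = m1 \<or> dd = m3" using dd1 m n1 n2 by auto
      have "dd \<in> colors_at E f x" unfolding dd_def colors_at_def using x(1) by auto
      then have edd: "e \<noteq> dd" using x(5) unfolding M_def by auto
      from ddm show ?thesis
      proof
        assume dm: "dd = m1"
        have h: "m1 \<noteq> m3" "m1 \<noteq> m2" "m3 \<noteq> m2" "e \<noteq> m1" using n1 n2 edd dm by auto
        show ?thesis
          using A2[OF pf d(1) d(3) d(2) x(2) x(3) x(1) dd_def[symmetric, unfolded dm] M(1) M(2) M(3) x(5)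
              m(1) m(3) m(2) h(1) h(2) h(3) x(4) h(4)] by blast
      next
        assume dm: "dd = m3"
        have h: "m3 \<noteq> m1" "m3 \<noteq> m2" "m1 \<noteq> m2" "e \<noteq> m3" using n1 n2 edd dm by auto
        obtain g where g: "ST f g" "proper_edge_coloring E g 5" "pres f g" "Good g u3 u2 \<or> Good g u2 u1"
          using A2[OF pf d(3)[symmetric] d(1)[symmetric] d(2)[symmetric] x(3) x(2) x(1)
              dd_def[symmetric, unfolded dm] M(3) M(2) M(1) x(5) m(3) m(1) m(2) h(1) h(2) h(3) x(4) h(4)] by blast
        then show ?thesis using Good_sym by blast
      qed
    qed
  qed
qed

lemma internal:
  assumes pf: "proper_edge_coloring E f 5" and P: "is_path V E P"
    and col: "\<forall>e\<in>path_edges P. f e \<in> {1,2}" and i: "0 < i" "Suc i < length P"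
  shows "\<exists>m. M f (P!i) m \<and> m \<in> {3,4,5} \<and> 1 \<in> colors_at E f (P!i) \<and> 2 \<in> colors_at E f (P!i)"
proof -
  obtain k where k: "i = Suc k" using i by (cases i) auto
  have e1a: "{P!k, P!i} \<in> path_edges P" unfolding pe_mem using i k by (intro exI[of _ k]) simp
  have e1b: "{P!i, P!Suc i} \<in> path_edges P" unfolding pe_mem using i by (intro exI[of _ i]) simp
  note e1 = e1a e1b
  have EE: "{P!k, P!i} \<in> E" "{P!i, P!Suc i} \<in> E" using P e1 unfolding is_path_def by blast+
  have dP: "distinct P" using P unfolding is_path_def by blast
  have kl: "k < length P" "i < length P" using i k by simp_all
  have n1: "P!k \<noteq> P!Suc i" using dP kl i k by (simp add: nth_eq_iff_index_eq)
  have n2: "P!k \<noteq> P!i" using dP kl i k by (simp add: nth_eq_iff_index_eq)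
  have ne: "{P!k, P!i} \<noteq> {P!i, P!Suc i}" using n1 n2 by (simp add: doubleton_eq_iff)
  have fne: "f {P!k, P!i} \<noteq> f {P!i, P!Suc i}"
  proof
    assume "f {P!k, P!i} = f {P!i, P!Suc i}"
    then have "{P!k, P!i} = {P!i, P!Suc i}" by (rule proper_eq[OF pf EE, of "P!i", rotated 2]) simp_all
    then show False using ne by simp
  qed
  have f12: "f {P!k, P!i} \<in> {1,2}" "f {P!i, P!Suc i} \<in> {1,2}" using col e1 by blast+
  have ca: "f {P!k, P!i} \<in> colors_at E f (P!i)" unfolding colors_at_def using EE(1) by (intro imageI) simp
  have cb: "f {P!i, P!Suc i} \<in> colors_at E f (P!i)" unfolding colors_at_def using EE(2) by (intro imageI) simp
  have c12: "1 \<in> colors_at E f (P!i)" "2 \<in> colors_at E f (P!i)"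
    using ca cb f12 fne by (metis insertE singletonD)+
  have "P!i \<in> V" using P kl(2) unfolding is_path_def by (meson nth_mem subsetD)
  then obtain m where Mm: "M f (P!i) m" using ex_M[OF pf] by blast
  then have "m \<in> {1..5}" "m \<noteq> 1" "m \<noteq> 2" using c12 unfolding M_def by auto
  then have "m \<in> {3,4,5}" by auto
  then show ?thesis using Mm c12 by blast
qed

lemma keep: assumes "pres f g" "k \<in> {1,2}" "k \<in> colors_at E f u" shows "k \<in> colors_at E g u"
proof -
  obtain e where e: "e \<in> E" "u \<in> e" "f e = k" using assms(3) unfolding colors_at_def by blast
  then have "g e = k" using assms(1,2) unfolding pres_def by auto
  then show ?thesis using e unfolding colors_at_def by blast
qed

lemma good_final:
  assumes "pres f g" "1 \<in> colors_at E f u" "2 \<in> colors_at E f u" "Good g u w"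
  shows "\<exists>c\<in>{3,4,5}. c \<notin> colors_at E g u \<union> colors_at E g w"
proof -
  have k: "1 \<in> colors_at E g u" "2 \<in> colors_at E g u"
    using keep[OF assms(1) _ assms(2)] keep[OF assms(1) _ assms(3)] by simp_all
  obtain c where c: "M g u c" "M g w c" using assms(4) unfolding Good_def by blast
  then have "c \<in> {1..5}" "c \<noteq> 1" "c \<noteq> 2" "c \<notin> colors_at E g u" "c \<notin> colors_at E g w"
    using k unfolding M_def by auto
  then show ?thesis by (intro bexI[of _ c]) auto
qed

end


theorem lemma2p1:
  fixes V :: "'a set" and E :: "'a set set" and f :: "'a set \<Rightarrow> nat"
  assumes "simple_graph V E"
    and "regular V E 4"
    and "proper_edge_coloring E f 5"
  shows
   "(\<forall>P. is_path V E P \<and> length P = 5 \<and> (\<forall>e\<in>path_edges P. f e \<in> {1, 2}) \<and>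
        \<not> ((\<forall>i\<in>{1,2,3::nat}. \<forall>j\<in>{1,2,3}. i \<noteq> j \<longrightarrow>
               card ((colors_at E f (P ! i) \<inter> colors_at E f (P ! j)) - {1, 2}) = 1) \<and>
            (\<forall>x\<in>neighbors E (P ! 2). x \<noteq> P ! 1 \<and> x \<noteq> P ! 3 \<longrightarrow>
               {3, 4, 5} \<subseteq> colors_at E f x))
      \<longrightarrow> (\<exists>g. (path_interchange_345 V E)\<^sup>*\<^sup>* f g \<and> proper_edge_coloring E g 5 \<and>
              (\<exists>c\<in>{3, 4, 5}. c \<notin> colors_at E g (P ! 1) \<union> colors_at E g (P ! 2) \<or>
                              c \<notin> colors_at E g (P ! 2) \<union> colors_at E g (P ! 3))))
    \<and>
    (\<forall>P. is_path V E P \<and> length P = 6 \<and> (\<forall>e\<in>path_edges P. f e \<in> {1, 2})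
      \<longrightarrow> (\<exists>g. (path_interchange_345 V E)\<^sup>*\<^sup>* f g \<and> proper_edge_coloring E g 5 \<and>
              (\<exists>i\<in>{1, 2, 3}. \<exists>c\<in>{3, 4, 5}.
                  c \<notin> colors_at E g (P ! i) \<union> colors_at E g (P ! Suc i))))"
proof -
  interpret G: G4 V E using assms(1,2) by unfold_locales
  note pf = assms(3)
  have vert: "P ! i \<in> V" if "is_path V E P" "i < length P" for P i
    using that unfolding is_path_def by (meson nth_mem subsetD)
  have dst: "P ! i \<noteq> P ! j" if "is_path V E P" "i < length P" "j < length P" "i \<noteq> j" for P i j
  proof -
    have "distinct P" using that(1) unfolding is_path_def by blast
    then show ?thesis using that(2-4) by (simp add: nth_eq_iff_index_eq)
  qed
  have edg: "{P ! i, P ! Suc i} \<in> E \<and> f {P ! i, P ! Suc i} \<in> {1,2}"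
    if "is_path V E P" "\<forall>e\<in>path_edges P. f e \<in> {1, 2}" "Suc i < length P" for P i
  proof -
    have "{P ! i, P ! Suc i} \<in> path_edges P" unfolding pe_mem using that(3) by (intro exI[of _ i]) simp
    then show ?thesis using that(1,2) unfolding is_path_def by blast
  qed
  have partA: "\<forall>P. is_path V E P \<and> length P = 5 \<and> (\<forall>e\<in>path_edges P. f e \<in> {1, 2}) \<and>
        \<not> ((\<forall>i\<in>{1,2,3::nat}. \<forall>j\<in>{1,2,3}. i \<noteq> j \<longrightarrow>
               card ((colors_at E f (P ! i) \<inter> colors_at E f (P ! j)) - {1, 2}) = 1) \<and>
            (\<forall>x\<in>neighbors E (P ! 2). x \<noteq> P ! 1 \<and> x \<noteq> P ! 3 \<longrightarrow>
               {3, 4, 5} \<subseteq> colors_at E f x))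
      \<longrightarrow> (\<exists>g. (path_interchange_345 V E)\<^sup>*\<^sup>* f g \<and> proper_edge_coloring E g 5 \<and>
              (\<exists>c\<in>{3, 4, 5}. c \<notin> colors_at E g (P ! 1) \<union> colors_at E g (P ! 2) \<or>
                              c \<notin> colors_at E g (P ! 2) \<union> colors_at E g (P ! 3)))"
  proof (intro allI impI)
    fix P assume h: "is_path V E P \<and> length P = 5 \<and> (\<forall>e\<in>path_edges P. f e \<in> {1, 2}) \<and>
        \<not> ((\<forall>i\<in>{1,2,3::nat}. \<forall>j\<in>{1,2,3}. i \<noteq> j \<longrightarrow>
               card ((colors_at E f (P ! i) \<inter> colors_at E f (P ! j)) - {1, 2}) = 1) \<and>
            (\<forall>x\<in>neighbors E (P ! 2). x \<noteq> P ! 1 \<and> x \<noteq> P ! 3 \<longrightarrow>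
               {3, 4, 5} \<subseteq> colors_at E f x))"
    have P: "is_path V E P" using h by simp
    have l: "length P = 5" using h by simp
    have col: "\<forall>e\<in>path_edges P. f e \<in> {1, 2}" using h by simp
    have nh: "\<not> ((\<forall>i\<in>{1,2,3::nat}. \<forall>j\<in>{1,2,3}. i \<noteq> j \<longrightarrow>
               card ((colors_at E f (P ! i) \<inter> colors_at E f (P ! j)) - {1, 2}) = 1) \<and>
            (\<forall>x\<in>neighbors E (P ! 2). x \<noteq> P ! 1 \<and> x \<noteq> P ! 3 \<longrightarrow>
               {3, 4, 5} \<subseteq> colors_at E f x))" using h by simp
    obtain m1 where m1: "G.M f (P!1) m1" "m1 \<in> {3,4,5}" "1 \<in> colors_at E f (P!1)" "2 \<in> colors_at E f (P!1)"
      using G.internal[OF pf P col, of 1] l by auto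
    obtain m2 where m2: "G.M f (P!2) m2" "m2 \<in> {3,4,5}" "1 \<in> colors_at E f (P!2)" "2 \<in> colors_at E f (P!2)"
      using G.internal[OF pf P col, of 2] l by auto
    obtain m3 where m3: "G.M f (P!3) m3" "m3 \<in> {3,4,5}" "1 \<in> colors_at E f (P!3)" "2 \<in> colors_at E f (P!3)"
      using G.internal[OF pf P col, of 3] l by auto
    have V: "P!1 \<in> V" "P!2 \<in> V" "P!3 \<in> V" using vert[OF P] l by simp_all
    have d: "P!1 \<noteq> P!2" "P!1 \<noteq> P!3" "P!2 \<noteq> P!3" using dst[OF P] l by simp_all
    have s1: "Suc 1 = (2::nat)" "Suc 2 = (3::nat)" by simp_all
    have l1: "Suc 1 < length P" "Suc 2 < length P" using l by simp_all
    have e12: "{P!1, P!2} \<in> E \<and> f {P!1, P!2} \<in> {1,2}" using edg[OF P col l1(1)] unfolding s1 .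
    have e23: "{P!2, P!3} \<in> E \<and> f {P!2, P!3} \<in> {1,2}" using edg[OF P col l1(2)] unfolding s1 .
    have cf: "colors_at E f (P!1) = {1..5} - {m1}" "colors_at E f (P!2) = {1..5} - {m2}"
      "colors_at E f (P!3) = {1..5} - {m3}" using m1(1) m2(1) m3(1) unfolding G.M_def by simp_all
    have hyp: "\<not>(m1 \<noteq> m2 \<and> m2 \<noteq> m3 \<and> m1 \<noteq> m3) \<or>
        (\<exists>x. {P!2,x} \<in> E \<and> x \<noteq> P!1 \<and> x \<noteq> P!3 \<and> (\<exists>e\<in>{3,4,5}. G.M f x e))"
    proof (rule ccontr)
      assume na: "\<not> ?thesis"
      then have dm: "m1 \<noteq> m2" "m2 \<noteq> m3" "m1 \<noteq> m3" by auto
      have nox: "\<not>(\<exists>e\<in>{3,4,5}. G.M f x e)" if "{P!2,x} \<in> E" "x \<noteq> P!1" "x \<noteq> P!3" for x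
        using na that by blast
      have k12: "card ((colors_at E f (P ! 1) \<inter> colors_at E f (P ! 2)) - {1, 2}) = 1"
        unfolding cf by (rule card1[OF m1(2) m2(2) dm(1)])
      have k21: "card ((colors_at E f (P ! 2) \<inter> colors_at E f (P ! 1)) - {1, 2}) = 1"
        unfolding cf by (rule card1[OF m2(2) m1(2) dm(1)[symmetric]])
      have k13: "card ((colors_at E f (P ! 1) \<inter> colors_at E f (P ! 3)) - {1, 2}) = 1"
        unfolding cf by (rule card1[OF m1(2) m3(2) dm(3)])
      have k31: "card ((colors_at E f (P ! 3) \<inter> colors_at E f (P ! 1)) - {1, 2}) = 1"
        unfolding cf by (rule card1[OF m3(2) m1(2) dm(3)[symmetric]])
      have k23: "card ((colors_at E f (P ! 2) \<inter> colors_at E f (P ! 3)) - {1, 2}) = 1"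
        unfolding cf by (rule card1[OF m2(2) m3(2) dm(2)])
      have k32: "card ((colors_at E f (P ! 3) \<inter> colors_at E f (P ! 2)) - {1, 2}) = 1"
        unfolding cf by (rule card1[OF m3(2) m2(2) dm(2)[symmetric]])
      have ci: "\<forall>i\<in>{1,2,3::nat}. \<forall>j\<in>{1,2,3}. i \<noteq> j \<longrightarrow>
               card ((colors_at E f (P ! i) \<inter> colors_at E f (P ! j)) - {1, 2}) = 1"
      proof (intro ballI impI)
        fix i j :: nat assume ij: "i \<in> {1,2,3}" "j \<in> {1,2,3}" "i \<noteq> j"
        then have "(i = 1 \<and> j = 2) \<or> (i = 2 \<and> j = 1) \<or> (i = 1 \<and> j = 3) \<or> (i = 3 \<and> j = 1) \<or>
          (i = 2 \<and> j = 3) \<or> (i = 3 \<and> j = 2)" by auto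
        then show "card ((colors_at E f (P ! i) \<inter> colors_at E f (P ! j)) - {1, 2}) = 1"
          using k12 k21 k13 k31 k23 k32 by (elim disjE conjE) simp_all
      qed
      have cii: "\<forall>x\<in>neighbors E (P ! 2). x \<noteq> P ! 1 \<and> x \<noteq> P ! 3 \<longrightarrow> {3, 4, 5} \<subseteq> colors_at E f x"
      proof (intro ballI impI)
        fix x assume x: "x \<in> neighbors E (P ! 2)" "x \<noteq> P ! 1 \<and> x \<noteq> P ! 3"
        have xe: "{P!2, x} \<in> E" using x(1) unfolding neighbors_def by simp
        have "x \<in> V" using G.edge2(2)[OF xe] .
        then obtain c where c: "G.M f x c" using G.ex_M[OF pf] by blast
        have nx: "\<not>(\<exists>e\<in>{3,4,5}. G.M f x e)" using nox[OF xe] x(2) by simp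
        have c35: "c \<notin> {3,4,5}"
        proof
          assume "c \<in> {3,4,5}"
          then have "\<exists>e\<in>{3,4,5}. G.M f x e" using c by (rule bexI[rotated])
          then show False using nx by simp
        qed
        have cs: "colors_at E f x = {1..5} - {c}" and c15: "c \<in> {1..5}" using c unfolding G.M_def by simp_all
        have "1 \<le> c" "c \<le> 5" using c15 by simp_all
        moreover have "c \<noteq> 3" "c \<noteq> 4" "c \<noteq> 5" using c35 by simp_all
        ultimately have c12: "c = 1 \<or> c = 2" by presburger
        show "{3, 4, 5} \<subseteq> colors_at E f x" unfolding cs using c12 by auto
      qed
      show False using nh conjI[OF ci cii] by (rule notE)
    qed
    obtain g where g: "G.ST f g" "proper_edge_coloring E g 5" "G.pres f g"
        "G.Good g (P!1) (P!2) \<or> G.Good g (P!2) (P!3)"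
      using G.PA[OF pf V d(1) d(2) d(3) m1(1) m2(1) m3(1) m1(2) m2(2) m3(2)
          conjunct1[OF e12] conjunct1[OF e23] conjunct2[OF e12] conjunct2[OF e23] hyp] by blast
    have "\<exists>c\<in>{3, 4, 5}. c \<notin> colors_at E g (P ! 1) \<union> colors_at E g (P ! 2) \<or>
                              c \<notin> colors_at E g (P ! 2) \<union> colors_at E g (P ! 3)"
      using g(4)
    proof
      assume "G.Good g (P!1) (P!2)"
      then show ?thesis using G.good_final[OF g(3) m1(3) m1(4)] by blast
    next
      assume "G.Good g (P!2) (P!3)"
      then show ?thesis using G.good_final[OF g(3) m2(3) m2(4)] by blast
    qed
    then show "\<exists>g. (path_interchange_345 V E)\<^sup>*\<^sup>* f g \<and> proper_edge_coloring E g 5 \<and>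
              (\<exists>c\<in>{3, 4, 5}. c \<notin> colors_at E g (P ! 1) \<union> colors_at E g (P ! 2) \<or>
                              c \<notin> colors_at E g (P ! 2) \<union> colors_at E g (P ! 3))"
      using g(1,2) by blast
  qed
  have partB: "\<forall>P. is_path V E P \<and> length P = 6 \<and> (\<forall>e\<in>path_edges P. f e \<in> {1, 2})
      \<longrightarrow> (\<exists>g. (path_interchange_345 V E)\<^sup>*\<^sup>* f g \<and> proper_edge_coloring E g 5 \<and>
              (\<exists>i\<in>{1, 2, 3}. \<exists>c\<in>{3, 4, 5}.
                  c \<notin> colors_at E g (P ! i) \<union> colors_at E g (P ! Suc i)))"
  proof (intro allI impI)
    fix P assume h: "is_path V E P \<and> length P = 6 \<and> (\<forall>e\<in>path_edges P. f e \<in> {1, 2})"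
    have P: "is_path V E P" using h by simp
    have l: "length P = 6" using h by simp
    have col: "\<forall>e\<in>path_edges P. f e \<in> {1, 2}" using h by simp
    obtain m1 where m1: "G.M f (P!1) m1" "m1 \<in> {3,4,5}" "1 \<in> colors_at E f (P!1)" "2 \<in> colors_at E f (P!1)"
      using G.internal[OF pf P col, of 1] l by auto
    obtain m2 where m2: "G.M f (P!2) m2" "m2 \<in> {3,4,5}" "1 \<in> colors_at E f (P!2)" "2 \<in> colors_at E f (P!2)"
      using G.internal[OF pf P col, of 2] l by auto
    obtain m3 where m3: "G.M f (P!3) m3" "m3 \<in> {3,4,5}" "1 \<in> colors_at E f (P!3)" "2 \<in> colors_at E f (P!3)"
      using G.internal[OF pf P col, of 3] l by auto
    obtain m4 where m4: "G.M f (P!4) m4" "m4 \<in> {3,4,5}" "1 \<in> colors_at E f (P!4)" "2 \<in> colors_at E f (P!4)"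
      using G.internal[OF pf P col, of 4] l by auto
    have V: "P!1 \<in> V" "P!2 \<in> V" "P!3 \<in> V" "P!4 \<in> V" using vert[OF P] l by simp_all
    have d: "P!1 \<noteq> P!2" "P!1 \<noteq> P!3" "P!1 \<noteq> P!4" "P!2 \<noteq> P!3" "P!2 \<noteq> P!4" "P!3 \<noteq> P!4"
      using dst[OF P] l by simp_all
    obtain g where g: "G.ST f g" "proper_edge_coloring E g 5" "G.pres f g"
        "G.Good g (P!1) (P!2) \<or> G.Good g (P!2) (P!3) \<or> G.Good g (P!3) (P!4)"
      using G.PB[OF pf V d m1(1) m2(1) m3(1) m4(1) m1(2) m2(2) m3(2) m4(2)] by blast
    have s: "Suc 1 = (2::nat)" "Suc 2 = (3::nat)" "Suc 3 = (4::nat)" by simp_all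
    have "\<exists>i\<in>{1, 2, 3::nat}. \<exists>c\<in>{3, 4, 5}. c \<notin> colors_at E g (P ! i) \<union> colors_at E g (P ! Suc i)"
      using g(4)
    proof (elim disjE)
      assume "G.Good g (P!1) (P!2)"
      then have "\<exists>c\<in>{3, 4, 5}. c \<notin> colors_at E g (P ! 1) \<union> colors_at E g (P ! Suc 1)"
        unfolding s using G.good_final[OF g(3) m1(3) m1(4)] by blast
      then show ?thesis by blast
    next
      assume "G.Good g (P!2) (P!3)"
      then have "\<exists>c\<in>{3, 4, 5}. c \<notin> colors_at E g (P ! 2) \<union> colors_at E g (P ! Suc 2)"
        unfolding s using G.good_final[OF g(3) m2(3) m2(4)] by blast
      then show ?thesis by blast
    next
      assume "G.Good g (P!3) (P!4)"
      then have "\<exists>c\<in>{3, 4, 5}. c \<notin> colors_at E g (P ! 3) \<union> colors_at E g (P ! Suc 3)"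
        unfolding s using G.good_final[OF g(3) m3(3) m3(4)] by blast
      then show ?thesis by blast
    qed
    then show "\<exists>g. (path_interchange_345 V E)\<^sup>*\<^sup>* f g \<and> proper_edge_coloring E g 5 \<and>
              (\<exists>i\<in>{1, 2, 3}. \<exists>c\<in>{3, 4, 5}.
                  c \<notin> colors_at E g (P ! i) \<union> colors_at E g (P ! Suc i))"
      using g(1,2) by blast
  qed
  show ?thesis using partA partB by (rule conjI)
qed


end
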